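(* Let $p$ be a prime, let $n\geq 1$ and $k\geq 1$ be integers, and let $q$ be an integer with $\gcd(q,p)=1$. Define $f:\{0,1,\dots,p^n-1\}\to\{0,1,\dots,p^n-1\}$ by $f(x)\equiv q^x \pmod{p^n}$, $0\leq f(x)<p^n$. Then the number of $k$-periodic points of $f$, i.e. the number of $x\in\{0,1,\dots,p^n-1\}$ with $f^{k}(x)=x$ (where $f^k$ is the $k$-fold iterate of $f$), is at most $(p-1)^k$. *)

theory Defs
  imports "HOL-Computational_Algebra.Primes"
begin

definition expmap :: "nat \<Rightarrow> nat \<Rightarrow> int \<Rightarrow> nat \<Rightarrow> nat" where
  "expmap p n q x = nat ((q ^ x) mod (int p ^ n))"

end

theory Submission
  imports Defs "HOL-Number_Theory.Number_Theory"
begin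

lemma pow_cong_tot:
  fixes q :: int and m a b :: nat
  assumes m: "m > 1" and cop: "coprime q (int m)" and ab: "[a = b] (mod totient m)"
  shows "[q ^ a = q ^ b] (mod int m)"
proof -
  have E: "[q ^ totient m = 1] (mod int m)"
    using residues.euler_theorem[of "int m" q] cop m by (simp add: residues_def)
  have key: "[q ^ a = q ^ b] (mod int m)" if "b \<le> a" "[a = b] (mod totient m)" for a b
  proof -
    have "\<exists>t. a = t * totient m + b" using cong_le_nat[of b a "totient m"] that by simp
    then obtain t where t0: "a = t * totient m + b" by blast
    have t: "a = totient m * t + b" using t0 by simp
    have "q ^ a = (q ^ totient m) ^ t * q ^ b"
      unfolding t power_add power_mult ..
    also have "[\<dots> = 1 ^ t * q ^ b] (mod int m)"
      by (rule cong_mult[OF cong_pow[OF E] cong_refl])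
    finally show ?thesis by simp
  qed
  show ?thesis
  proof (cases "b \<le> a")
    case True then show ?thesis using key ab by blast
  next
    case False then show ?thesis using key[of a b] ab by (meson cong_sym key nat_le_linear)
  qed
qed
theorem corollary2:
  fixes p n k :: nat and q :: int
  assumes "prime p" and "n \<ge> 1" and "k \<ge> 1" and "gcd q (int p) = 1"
  shows "card {x \<in> {0..<p ^ n}. (expmap p n q ^^ k) x = x} \<le> (p - 1) ^ k"
proof -
  define F where "F = expmap p n q"
  define S where "S = {x \<in> {0..<p ^ n}. (F ^^ k) x = x}"
  define g where "g x = restrict (\<lambda>i. (F ^^ i) x mod (p - 1)) {..<k}" for x
  have p2: "p \<ge> 2" using assms(1) prime_ge_2_nat by blast
  have per: "(F ^^ i) x = (F ^^ (i mod k)) x" if "(F ^^ k) x = x" for x i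
  proof (induction i rule: less_induct)
    case (less i)
    show ?case
    proof (cases "i < k")
      case True then show ?thesis by simp
    next
      case False
      then have i: "i = (i - k) + k" by simp
      have "(F ^^ i) x = (F ^^ (i - k)) ((F ^^ k) x)"
        by (subst i) (simp add: funpow_add)
      also have "\<dots> = (F ^^ (i - k)) x" using that by simp
      also have "\<dots> = (F ^^ ((i - k) mod k)) x" using less assms(3) False by simp
      also have "(i - k) mod k = i mod k" using False by (simp add: mod_if)
      finally show ?thesis .
    qed
  qed
  have Fstep: "[F a = F b] (mod p ^ Suc j)"
    if "j < n" "[a = b] (mod p ^ j)" "[a = b] (mod (p - 1))" for a b j
  proof -
    have cop1: "coprime (p ^ j) (p - 1)"
    proof -
      have "coprime p (p - 1)" using p2
        by (metis coprime_diff_one_right_nat less_numeral_extra(3) not_numeral_le_zero zero_less_iff_neq_zero)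
      then show ?thesis by simp
    qed
    have "[a = b] (mod lcm (p ^ j) (p - 1))" using cong_cong_lcm_nat that by blast
    then have ab: "[a = b] (mod totient (p ^ Suc j))"
    proof -
      have "totient (p ^ Suc j) = p ^ j * (p - 1)" using totient_prime_power_Suc[OF assms(1)] .
      moreover have "lcm (p ^ j) (p - 1) = p ^ j * (p - 1)" using cop1 by (simp add: lcm_coprime)
      ultimately show ?thesis using \<open>[a = b] (mod lcm (p ^ j) (p - 1))\<close> by simp
    qed
    have m1: "p ^ Suc j > 1" using p2
      by (metis One_nat_def Suc_le_eq le_less_trans less_numeral_extra(4) numeral_2_eq_2 one_less_power zero_less_Suc)
    have copq: "coprime q (int (p ^ Suc j))"
      using assms(4) by (simp add: coprime_iff_gcd_eq_1[symmetric])
    have c: "[q ^ a = q ^ b] (mod int (p ^ Suc j))" using pow_cong_tot[OF m1 copq ab] .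
    have dv: "int (p ^ Suc j) dvd int p ^ n"
      using that(1) by (metis Suc_leI le_imp_power_dvd of_nat_dvd_iff of_nat_power)
    have pos: "int p ^ n > 0" using p2 by simp
    have "[int (F a) = q ^ a] (mod int (p ^ Suc j))"
    proof -
      have "int (F a) = q ^ a mod int p ^ n" using pos by (simp add: F_def expmap_def)
      then show ?thesis using dv
        by (metis cong_def mod_mod_cancel)
    qed
    moreover have "[int (F b) = q ^ b] (mod int (p ^ Suc j))"
    proof -
      have "int (F b) = q ^ b mod int p ^ n" using pos by (simp add: F_def expmap_def)
      then show ?thesis using dv
        by (metis cong_def mod_mod_cancel)
    qed
    ultimately have "[int (F a) = int (F b)] (mod int (p ^ Suc j))"
      using c by (meson cong_sym cong_trans)
    then show ?thesis using cong_int_iff by blast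
  qed
  have inj: "inj_on g S"
  proof (rule inj_onI)
    fix x y assume x: "x \<in> S" and y: "y \<in> S" and gxy: "g x = g y"
    have px: "(F ^^ k) x = x" and py: "(F ^^ k) y = y" using x y by (auto simp: S_def)
    have m1: "[(F ^^ i) x = (F ^^ i) y] (mod (p - 1))" for i
    proof -
      have "i mod k < k" using assms(3) by simp
      then have "(F ^^ (i mod k)) x mod (p - 1) = (F ^^ (i mod k)) y mod (p - 1)"
        using fun_cong[OF gxy, of "i mod k"] by (simp add: g_def)
      then show ?thesis using per[OF px, of i] per[OF py, of i] by (simp add: cong_def)
    qed
    have "\<forall>i. [(F ^^ i) x = (F ^^ i) y] (mod p ^ j)" if "j \<le> n" for j
      using that
    proof (induction j)
      case 0 then show ?case by simp
    next
      case (Suc j)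
      have s: "[(F ^^ Suc i) x = (F ^^ Suc i) y] (mod p ^ Suc j)" for i
        using Fstep[of j "(F ^^ i) x" "(F ^^ i) y"] Suc m1 by simp
      show ?case
      proof
        fix i
        have e: "Suc (i + k - 1) = i + k" using assms(3) by simp
        have "(F ^^ (Suc (i + k - 1))) x = (F ^^ i) x"
          unfolding e funpow_add using px by simp
        moreover have "(F ^^ (Suc (i + k - 1))) y = (F ^^ i) y"
          unfolding e funpow_add using py by simp
        ultimately show "[(F ^^ i) x = (F ^^ i) y] (mod p ^ Suc j)"
          using s[of "i + k - 1"] by simp
      qed
    qed
    then have "[x = y] (mod p ^ n)" by (metis funpow_0 order_refl)
    then show "x = y" using x y by (auto simp: S_def intro: cong_less_modulus_unique_nat)
  qed
  have sub: "g ` S \<subseteq> PiE {..<k} (\<lambda>_. {..<p - 1})"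
    using p2 by (auto simp: g_def PiE_def extensional_def)
  have "card S \<le> card (PiE {..<k} (\<lambda>_. {..<p - 1}))"
    using card_inj_on_le[OF inj sub] by (simp add: finite_PiE)
  also have "\<dots> = (p - 1) ^ k" by (simp add: card_PiE)
  finally show ?thesis by (simp add: S_def F_def)
qed

end
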